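(* Let $p$ be a nonzero integer and let $d$ be an integer with $d \neq 0$, $d \neq -1$, such that $d$ and $d+1$ are both divisors of $2p$, and such that $2p\left(d + \frac{1}{d}\right)$, $2p\left(d + \frac{1}{d+1}\right)$ and $2p\left(\frac{1}{d} + \frac{d}{d+1}\right)$ are integers. Then $$\left\{-p - 2p\left(d + \frac{1}{d}\right)\right\}^3 + \left\{p + 2p\left(d + \frac{1}{d+1}\right)\right\}^3 + \left\{p + 2p\left(\frac{1}{d} + \frac{d}{d+1}\right)\right\}^3 = 3p^3,$$ so that $3p^3$ is represented as a sum of three integer cubes. *)

theory Defs
  imports Complex_Main
begin

end

theory Submission
  imports Defs
begin

lemma poly3: "(2*D^2+3*D+3)^3 * D^3 + (3*D^2+3*D+2)^3 - (2*D^2+D+2)^3 * (D+1)^3 = 3 * D^3 * ((D::rat)+1)^3"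
  by algebra

lemma comb3: fixes P D E u v w :: rat assumes "D \<noteq> 0" "E \<noteq> 0"
  shows "(- (P * u / D))^3 + (P * v / E)^3 + (P * w / (D*E))^3
        = P^3 * (v^3 * D^3 + w^3 - u^3 * E^3) / (D^3 * E^3)"
  using assms by (simp add: field_simps power_mult_distrib power_divide)

theorem lemma3p2:
  fixes p d :: int
  assumes "p \<noteq> 0" and "d \<noteq> 0" and "d \<noteq> -1"
    and "d dvd 2 * p" and "(d + 1) dvd 2 * p"
    and "2 * of_int p * (of_int d + 1 / of_int d) \<in> (\<int> :: rat set)"
    and "2 * of_int p * (of_int d + 1 / (of_int d + 1)) \<in> (\<int> :: rat set)"
    and "2 * of_int p * (1 / of_int d + of_int d / (of_int d + 1)) \<in> (\<int> :: rat set)"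
  shows "(- of_int p - 2 * of_int p * (of_int d + 1 / of_int d)) ^ 3
         + (of_int p + 2 * of_int p * (of_int d + 1 / (of_int d + 1))) ^ 3
         + (of_int p + 2 * of_int p * (1 / of_int d + of_int d / (of_int d + 1))) ^ 3
         = (3 * of_int p ^ 3 :: rat)
    \<and> (\<exists>x y z :: int. x ^ 3 + y ^ 3 + z ^ 3 = 3 * p ^ 3
         \<and> of_int x = - of_int p - 2 * of_int p * (of_int d + 1 / (of_int d :: rat))
         \<and> of_int y = of_int p + 2 * of_int p * (of_int d + 1 / (of_int d + (1 :: rat)))
         \<and> of_int z = of_int p + 2 * of_int p * (1 / of_int d + of_int d / (of_int d + (1 :: rat))))"
proof -
  define D where "D = (of_int d :: rat)"
  define P where "P = (of_int p :: rat)"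
  have D0: "D \<noteq> 0" using assms(2) by (simp add: D_def)
  have D1: "D + 1 \<noteq> 0" using assms(3) unfolding D_def
    by (metis add.commute add_eq_0_iff of_int_1 of_int_add of_int_eq_0_iff of_int_minus)
  have eq: "(- P - 2 * P * (D + 1 / D)) ^ 3
         + (P + 2 * P * (D + 1 / (D + 1))) ^ 3
         + (P + 2 * P * (1 / D + D / (D + 1))) ^ 3 = 3 * P ^ 3"
  proof -
    have hx: "- P - 2 * P * (D + 1 / D) = - (P * (2*D^2+D+2) / D)" using D0 by (simp add: field_simps power2_eq_square)
    have hy: "P + 2 * P * (D + 1 / (D + 1)) = P * (2*D^2+3*D+3) / (D+1)" using D1 by (simp add: field_simps power2_eq_square)
    have DD: "D + D*D \<noteq> 0"
    proof -
      have "D + D*D = D*(D+1)" by (simp add: algebra_simps)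
      thus ?thesis using D0 D1 by simp
    qed
    have hz: "P + 2 * P * (1 / D + D / (D + 1)) = P * (3*D^2+3*D+2) / (D*(D+1))"
      using D0 D1 DD by (simp add: field_simps power2_eq_square)
    have "(- (P * (2*D^2+D+2) / D))^3 + (P * (2*D^2+3*D+3) / (D+1))^3 + (P * (3*D^2+3*D+2) / (D*(D+1)))^3
        = P^3 * ((2*D^2+3*D+3)^3 * D^3 + (3*D^2+3*D+2)^3 - (2*D^2+D+2)^3 * (D+1)^3) / (D^3 * (D+1)^3)"
      by (rule comb3[OF D0 D1])
    also have "... = 3 * P^3" using D0 D1 by (simp only: poly3) simp
    finally show ?thesis by (simp only: hx hy hz)
  qed
  obtain a where a: "2 * P * (D + 1 / D) = of_int a" using assms(6) unfolding D_def P_def by (auto elim: Ints_cases)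
  obtain b where b: "2 * P * (D + 1 / (D + 1)) = of_int b" using assms(7) unfolding D_def P_def by (auto elim: Ints_cases)
  obtain c where c: "2 * P * (1 / D + D / (D + 1)) = of_int c" using assms(8) unfolding D_def P_def by (auto elim: Ints_cases)
  have "of_int ((- p - a) ^ 3 + (p + b) ^ 3 + (p + c) ^ 3) = (of_int (3 * p ^ 3) :: rat)"
  proof -
    have "(- P - of_int a) ^ 3 + (P + of_int b) ^ 3 + (P + of_int c) ^ 3 = 3 * P ^ 3"
      using eq by (simp only: a b c)
    thus ?thesis unfolding P_def
      by (simp only: of_int_add of_int_power of_int_diff of_int_minus of_int_mult of_int_numeral)
  qed
  hence E: "(- p - a) ^ 3 + (p + b) ^ 3 + (p + c) ^ 3 = 3 * p ^ 3" by (simp only: of_int_eq_iff)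
  have Pp: "of_int p = P" by (simp add: P_def)
  have xa: "of_int (- p - a) = - P - 2 * P * (D + 1 / D)" by (simp only: of_int_diff of_int_minus Pp a)
  have yb: "of_int (p + b) = P + 2 * P * (D + 1 / (D + 1))" by (simp only: of_int_add Pp b)
  have zc: "of_int (p + c) = P + 2 * P * (1 / D + D / (D + 1))" by (simp only: of_int_add Pp c)
  have ex: "\<exists>x y z :: int. x ^ 3 + y ^ 3 + z ^ 3 = 3 * p ^ 3
         \<and> of_int x = - P - 2 * P * (D + 1 / D)
         \<and> of_int y = P + 2 * P * (D + 1 / (D + 1))
         \<and> of_int z = P + 2 * P * (1 / D + D / (D + 1))"
    using E xa yb zc by (intro exI conjI)
  show ?thesis
  proof (rule conjI)
    show "(- of_int p - 2 * of_int p * (of_int d + 1 / of_int d)) ^ 3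
         + (of_int p + 2 * of_int p * (of_int d + 1 / (of_int d + 1))) ^ 3
         + (of_int p + 2 * of_int p * (1 / of_int d + of_int d / (of_int d + 1))) ^ 3
         = (3 * of_int p ^ 3 :: rat)" using eq by (simp only: D_def P_def)
    show "\<exists>x y z :: int. x ^ 3 + y ^ 3 + z ^ 3 = 3 * p ^ 3
         \<and> of_int x = - of_int p - 2 * of_int p * (of_int d + 1 / (of_int d :: rat))
         \<and> of_int y = of_int p + 2 * of_int p * (of_int d + 1 / (of_int d + (1 :: rat)))
         \<and> of_int z = of_int p + 2 * of_int p * (1 / of_int d + of_int d / (of_int d + (1 :: rat)))"
      using ex by (simp only: D_def P_def)
  qed
qed

end
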